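(* Let $(H,\leq,\ast)$ be a discrete $\omega$-dimensional poc-set and let $\Sigma\in\Re H$ have finite codimension $\delta>0$. Then there exists $\Sigma_1\in\Re H$ with $\Sigma_1<\Sigma$ and $\operatorname{codim}(\Sigma_1)=\delta-1$.
   Context: Poc-set: poset with minimum $0$ and order-reversing involution $\ast$ with $h\le h^\ast\Rightarrow h=0$. Discrete: intervals between proper elements finite. Transverse: none of $h\le k,h^\ast\le k,h\le k^\ast,h^\ast\le k^\ast$; $\omega$-dimensional: no infinite transverse subset. Ultrafilter: $\alpha\subseteq H$ with exactly one of $h,h^\ast$ in $\alpha$ for each $h$, no $h,k\in\alpha$ with $h\le k^\ast$; $H^\circ$ with topology from $2^H$. Almost-equality: finite difference. $\Re H$ is the set of almost-equality classes, partially ordered by $\Sigma_1\ge\Sigma_2$ iff $\Sigma_1\cap\overline{\Sigma_2}\ne\varnothing$ (closure in $H^\circ$). For chains $c=(c_n)$, $d=(d_m)$ (infinite strictly descending), $c$ dominates $d$ if for every $m$ there is $n$ with $c_n\le d_m$; $c\sim d$ if each dominates the other. The codimension of $\Sigma$ is the cardinality of the set of $\sim$-classes of infinite strictly descending chains contained in $\xi$, for any $\xi\in\Sigma$ (this is independent of $\xi$). *)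

theory Defs
  imports Main "HOL-Library.Extended_Nat"
begin

definition poc_set :: "'a set \<Rightarrow> ('a \<Rightarrow> 'a \<Rightarrow> bool) \<Rightarrow> 'a \<Rightarrow> ('a \<Rightarrow> 'a) \<Rightarrow> bool" where
  "poc_set H le z st \<longleftrightarrow>
     (\<forall>h\<in>H. le h h) \<and>
     (\<forall>h\<in>H. \<forall>k\<in>H. le h k \<and> le k h \<longrightarrow> h = k) \<and>
     (\<forall>h\<in>H. \<forall>k\<in>H. \<forall>l\<in>H. le h k \<and> le k l \<longrightarrow> le h l) \<and>
     z \<in> H \<and> (\<forall>h\<in>H. le z h) \<and>
     (\<forall>h\<in>H. st h \<in> H \<and> st (st h) = h) \<and>
     (\<forall>h\<in>H. \<forall>k\<in>H. le h k \<longrightarrow> le (st k) (st h)) \<and>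
     (\<forall>h\<in>H. le h (st h) \<longrightarrow> h = z)"

definition proper :: "'a set \<Rightarrow> 'a \<Rightarrow> ('a \<Rightarrow> 'a) \<Rightarrow> 'a \<Rightarrow> bool" where
  "proper H z st h \<longleftrightarrow> h \<in> H \<and> h \<noteq> z \<and> h \<noteq> st z"

definition discrete_poc :: "'a set \<Rightarrow> ('a \<Rightarrow> 'a \<Rightarrow> bool) \<Rightarrow> 'a \<Rightarrow> ('a \<Rightarrow> 'a) \<Rightarrow> bool" where
  "discrete_poc H le z st \<longleftrightarrow>
     (\<forall>h k. proper H z st h \<and> proper H z st k \<longrightarrow> finite {x\<in>H. le h x \<and> le x k})"

definition transverse :: "('a \<Rightarrow> 'a \<Rightarrow> bool) \<Rightarrow> ('a \<Rightarrow> 'a) \<Rightarrow> 'a \<Rightarrow> 'a \<Rightarrow> bool" where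
  "transverse le st h k \<longleftrightarrow>
     \<not> le h k \<and> \<not> le (st h) k \<and> \<not> le h (st k) \<and> \<not> le (st h) (st k)"

definition omega_dimensional :: "'a set \<Rightarrow> ('a \<Rightarrow> 'a \<Rightarrow> bool) \<Rightarrow> ('a \<Rightarrow> 'a) \<Rightarrow> bool" where
  "omega_dimensional H le st \<longleftrightarrow>
     \<not> (\<exists>T. T \<subseteq> H \<and> infinite T \<and> (\<forall>h\<in>T. \<forall>k\<in>T. h \<noteq> k \<longrightarrow> transverse le st h k))"

definition ultrafilter :: "'a set \<Rightarrow> ('a \<Rightarrow> 'a \<Rightarrow> bool) \<Rightarrow> ('a \<Rightarrow> 'a) \<Rightarrow> 'a set \<Rightarrow> bool" where
  "ultrafilter H le st \<alpha> \<longleftrightarrow>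
     \<alpha> \<subseteq> H \<and> (\<forall>h\<in>H. (h \<in> \<alpha>) \<noteq> (st h \<in> \<alpha>)) \<and>
     \<not> (\<exists>h\<in>\<alpha>. \<exists>k\<in>\<alpha>. le h (st k))"

definition ultrafilters :: "'a set \<Rightarrow> ('a \<Rightarrow> 'a \<Rightarrow> bool) \<Rightarrow> ('a \<Rightarrow> 'a) \<Rightarrow> 'a set set" where
  "ultrafilters H le st = {\<alpha>. ultrafilter H le st \<alpha>}"

text \<open>Closure in H-circ of a set S of ultrafilters, for the subspace topology
  induced from the product topology on 2^H (basic open sets are cylinders given by
  finitely many coordinates).\<close>
definition uclosure :: "'a set \<Rightarrow> ('a \<Rightarrow> 'a \<Rightarrow> bool) \<Rightarrow> ('a \<Rightarrow> 'a) \<Rightarrow> 'a set set \<Rightarrow> 'a set set" where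
  "uclosure H le st S = {\<xi> \<in> ultrafilters H le st.
     \<forall>F. finite F \<and> F \<subseteq> H \<longrightarrow> (\<exists>\<eta>\<in>S. \<eta> \<inter> F = \<xi> \<inter> F)}"

definition almost_eq :: "'a set \<Rightarrow> 'a set \<Rightarrow> bool" where
  "almost_eq \<xi> \<eta> \<longleftrightarrow> finite ((\<xi> - \<eta>) \<union> (\<eta> - \<xi>))"

definition ReH :: "'a set \<Rightarrow> ('a \<Rightarrow> 'a \<Rightarrow> bool) \<Rightarrow> ('a \<Rightarrow> 'a) \<Rightarrow> 'a set set set" where
  "ReH H le st = {{\<eta> \<in> ultrafilters H le st. almost_eq \<xi> \<eta>} | \<xi>. \<xi> \<in> ultrafilters H le st}"

definition Re_le :: "'a set \<Rightarrow> ('a \<Rightarrow> 'a \<Rightarrow> bool) \<Rightarrow> ('a \<Rightarrow> 'a) \<Rightarrow> 'a set set \<Rightarrow> 'a set set \<Rightarrow> bool" where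
  "Re_le H le st S2 S1 \<longleftrightarrow> S1 \<inter> uclosure H le st S2 \<noteq> {}"

definition Re_less :: "'a set \<Rightarrow> ('a \<Rightarrow> 'a \<Rightarrow> bool) \<Rightarrow> ('a \<Rightarrow> 'a) \<Rightarrow> 'a set set \<Rightarrow> 'a set set \<Rightarrow> bool" where
  "Re_less H le st S2 S1 \<longleftrightarrow> Re_le H le st S2 S1 \<and> S2 \<noteq> S1"

definition desc_chains :: "('a \<Rightarrow> 'a \<Rightarrow> bool) \<Rightarrow> 'a set \<Rightarrow> (nat \<Rightarrow> 'a) set" where
  "desc_chains le \<xi> = {c. range c \<subseteq> \<xi> \<and> (\<forall>n. le (c (Suc n)) (c n) \<and> c (Suc n) \<noteq> c n)}"

definition dominates :: "('a \<Rightarrow> 'a \<Rightarrow> bool) \<Rightarrow> (nat \<Rightarrow> 'a) \<Rightarrow> (nat \<Rightarrow> 'a) \<Rightarrow> bool" where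
  "dominates le c d \<longleftrightarrow> (\<forall>m. \<exists>n. le (c n) (d m))"

definition chain_equiv :: "('a \<Rightarrow> 'a \<Rightarrow> bool) \<Rightarrow> (nat \<Rightarrow> 'a) \<Rightarrow> (nat \<Rightarrow> 'a) \<Rightarrow> bool" where
  "chain_equiv le c d \<longleftrightarrow> dominates le c d \<and> dominates le d c"

definition chain_classes :: "('a \<Rightarrow> 'a \<Rightarrow> bool) \<Rightarrow> 'a set \<Rightarrow> (nat \<Rightarrow> 'a) set set" where
  "chain_classes le \<xi> = {{d \<in> desc_chains le \<xi>. chain_equiv le c d} | c. c \<in> desc_chains le \<xi>}"

text \<open>Codimension of Sigma, computed at some element xi of Sigma (the paper shows
  this is independent of xi); infinite codimension is represented by infinity.\<close>
definition codim :: "('a \<Rightarrow> 'a \<Rightarrow> bool) \<Rightarrow> 'a set set \<Rightarrow> enat" where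
  "codim le S = (let \<xi> = (SOME \<xi>. \<xi> \<in> S) in
     if finite (chain_classes le \<xi>) then enat (card (chain_classes le \<xi>)) else \<infinity>)"

end

theory Submission
  imports Defs "HOL-Library.Ramsey"
begin

lemma almost_eq_refl: "almost_eq x x" by (simp add: almost_eq_def)
lemma almost_eq_sym: "almost_eq x y \<Longrightarrow> almost_eq y x" by (simp add: almost_eq_def Un_commute)
lemma almost_eq_trans: "almost_eq x y \<Longrightarrow> almost_eq y w \<Longrightarrow> almost_eq x w"
  unfolding almost_eq_def by (rule finite_subset[of _ "((x - y) \<union> (y - x)) \<union> ((y - w) \<union> (w - y))"]) auto

lemma finite_uniform:
  assumes "finite I" "\<forall>i\<in>I. \<exists>k. P i k" "\<And>i k k'. P i k \<Longrightarrow> k \<le> k' \<Longrightarrow> P i k'"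
  shows "\<exists>k\<ge>(K0::nat). \<forall>i\<in>I. P i k"
  using assms(1,2)
proof (induction I rule: finite_induct)
  case empty then show ?case by auto
next
  case (insert x F)
  then obtain k where k: "k \<ge> K0" "\<forall>i\<in>F. P i k" by auto
  obtain k' where k': "P x k'" using insert by auto
  show ?case
  proof (intro exI[of _ "max k k'"] conjI ballI)
    show "K0 \<le> max k k'" using k by simp
    fix i assume "i \<in> insert x F"
    then show "P i (max k k')" using k k' assms(3) max.cobounded1 max.cobounded2 by blast
  qed
qed

locale PS =
  fixes H :: "'a set" and le :: "'a \<Rightarrow> 'a \<Rightarrow> bool" and z :: 'a and st :: "'a \<Rightarrow> 'a"
  assumes poc: "poc_set H le z st" and disc: "discrete_poc H le z st"
    and omd: "omega_dimensional H le st"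
begin

lemma P: "(\<forall>h\<in>H. le h h) \<and>
     (\<forall>h\<in>H. \<forall>k\<in>H. le h k \<and> le k h \<longrightarrow> h = k) \<and>
     (\<forall>h\<in>H. \<forall>k\<in>H. \<forall>l\<in>H. le h k \<and> le k l \<longrightarrow> le h l) \<and>
     z \<in> H \<and> (\<forall>h\<in>H. le z h) \<and>
     (\<forall>h\<in>H. st h \<in> H \<and> st (st h) = h) \<and>
     (\<forall>h\<in>H. \<forall>k\<in>H. le h k \<longrightarrow> le (st k) (st h)) \<and>
     (\<forall>h\<in>H. le h (st h) \<longrightarrow> h = z)"
  using poc unfolding poc_set_def by (rule HOL.iffD1[OF HOL.refl])
lemma refl: "h \<in> H \<Longrightarrow> le h h" using P by blast
lemma antisym: "h \<in> H \<Longrightarrow> k \<in> H \<Longrightarrow> le h k \<Longrightarrow> le k h \<Longrightarrow> h = k" using conjunct1[OF conjunct2[OF P]] by blast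
lemma trans: "h \<in> H \<Longrightarrow> k \<in> H \<Longrightarrow> l \<in> H \<Longrightarrow> le h k \<Longrightarrow> le k l \<Longrightarrow> le h l"
  using conjunct1[OF conjunct2[OF conjunct2[OF P]]] by blast
lemma zH: "z \<in> H" using P by blast
lemma zle: "h \<in> H \<Longrightarrow> le z h" using P by blast
lemma stH: "h \<in> H \<Longrightarrow> st h \<in> H" using P by blast
lemma stst: "h \<in> H \<Longrightarrow> st (st h) = h" using P by blast
lemma strev: "h \<in> H \<Longrightarrow> k \<in> H \<Longrightarrow> le h k \<Longrightarrow> le (st k) (st h)" using P by blast
lemma lest: "h \<in> H \<Longrightarrow> le h (st h) \<Longrightarrow> h = z" using P by blast
lemma strev_iff: "h \<in> H \<Longrightarrow> k \<in> H \<Longrightarrow> le (st k) (st h) \<longleftrightarrow> le h k"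
  by (metis strev stst stH)
lemma le_stz: "h \<in> H \<Longrightarrow> le h (st z)"
  by (metis strev zH zle stst stH)

lemma fin_int: "h \<in> H \<Longrightarrow> k \<in> H \<Longrightarrow> h \<noteq> z \<Longrightarrow> h \<noteq> st z \<Longrightarrow> k \<noteq> z \<Longrightarrow> k \<noteq> st z
   \<Longrightarrow> finite {x\<in>H. le h x \<and> le x k}"
  using disc by (simp add: discrete_poc_def proper_def)

lemma uf_sub: "ultrafilter H le st \<xi> \<Longrightarrow> \<xi> \<subseteq> H" by (simp add: ultrafilter_def)
lemma uf_z: "ultrafilter H le st \<xi> \<Longrightarrow> z \<notin> \<xi>"
proof
  assume a: "ultrafilter H le st \<xi>" "z \<in> \<xi>"
  have "le z (st z)" using zle stH zH by blast
  then show False using a unfolding ultrafilter_def by blast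
qed
lemma uf_xor: "ultrafilter H le st \<xi> \<Longrightarrow> h \<in> H \<Longrightarrow> (h \<in> \<xi>) \<noteq> (st h \<in> \<xi>)"
  by (simp add: ultrafilter_def)
lemma uf_cons: "ultrafilter H le st \<xi> \<Longrightarrow> h \<in> \<xi> \<Longrightarrow> k \<in> \<xi> \<Longrightarrow> \<not> le h (st k)"
  unfolding ultrafilter_def by blast

end
context PS begin

definition cls :: "'a set \<Rightarrow> (nat \<Rightarrow> 'a) \<Rightarrow> (nat \<Rightarrow> 'a) set" where
  "cls B c = {d \<in> desc_chains le B. chain_equiv le c d}"

lemma chain_classes_eq: "chain_classes le B = cls B ` desc_chains le B"
  unfolding chain_classes_def cls_def by auto

lemma dc_H: "c \<in> desc_chains le B \<Longrightarrow> B \<subseteq> H \<Longrightarrow> c n \<in> H"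
  unfolding desc_chains_def by auto

lemma dc_mono: assumes "c \<in> desc_chains le B" "B \<subseteq> H" "m \<le> n" shows "le (c n) (c m)"
  using assms(3)
proof (induction n)
  case 0 then show ?case using refl dc_H[OF assms(1,2)] by simp
next
  case (Suc n)
  show ?case
  proof (cases "m = Suc n")
    case True then show ?thesis using refl dc_H[OF assms(1,2)] by simp
  next
    case False
    then have "le (c n) (c m)" using Suc by simp
    moreover have "le (c (Suc n)) (c n)" using assms(1) unfolding desc_chains_def by auto
    ultimately show ?thesis using trans[OF dc_H[OF assms(1,2)] dc_H[OF assms(1,2)] dc_H[OF assms(1,2)]] by blast
  qed
qed

lemma dc_strict: assumes "c \<in> desc_chains le B" "B \<subseteq> H" "m < n" shows "c n \<noteq> c m"
proof
  assume eq: "c n = c m"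
  have "le (c n) (c (Suc m))" using dc_mono[OF assms(1,2)] assms(3) by simp
  moreover have "le (c (Suc m)) (c m)" "c (Suc m) \<noteq> c m" using assms(1) unfolding desc_chains_def by auto
  ultimately have "le (c m) (c (Suc m))" using eq by simp
  then have "c (Suc m) = c m" using antisym[OF dc_H[OF assms(1,2)] dc_H[OF assms(1,2)] \<open>le (c (Suc m)) (c m)\<close>] by simp
  then show False using \<open>c (Suc m) \<noteq> c m\<close> by simp
qed

lemma dc_inj: assumes "c \<in> desc_chains le B" "B \<subseteq> H" shows "inj c"
proof (rule injI)
  fix x y assume "c x = c y"
  show "x = y"
  proof (rule ccontr)
    assume "x \<noteq> y"
    then have "x < y \<or> y < x" by arith
    then show False using dc_strict[OF assms, of x y] dc_strict[OF assms, of y x] \<open>c x = c y\<close> by auto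
  qed
qed

lemma dc_infinite: assumes "c \<in> desc_chains le B" "B \<subseteq> H" "infinite N" shows "infinite (c ` N)"
proof
  assume "finite (c ` N)"
  moreover have "inj_on c N" using dc_inj[OF assms(1,2)] inj_on_subset by blast
  ultimately have "finite N" using finite_imageD by blast
  then show False using assms(3) by simp
qed

lemma dc_not_top: assumes "c \<in> desc_chains le B" "B \<subseteq> H" "n \<ge> 1" shows "c n \<noteq> st z"
proof
  assume "c n = st z"
  then have "le (c 0) (c n)" using le_stz dc_H[OF assms(1,2)] by simp
  moreover have "le (c n) (c 0)" using dc_mono[OF assms(1,2)] by simp
  ultimately have "c n = c 0" using antisym[OF dc_H[OF assms(1,2)] dc_H[OF assms(1,2)]] by simp
  then show False using dc_strict[OF assms(1,2), of 0 n] assms(3) by simp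
qed

lemma dc_sub: "A \<subseteq> B \<Longrightarrow> desc_chains le A \<subseteq> desc_chains le B"
  unfolding desc_chains_def by auto

definition tl_ch :: "(nat \<Rightarrow> 'a) \<Rightarrow> nat \<Rightarrow> nat \<Rightarrow> 'a" where "tl_ch d N = (\<lambda>m. d (m + N))"

lemma tl_dc: assumes "d \<in> desc_chains le B" "\<forall>m\<ge>N. d m \<in> A" shows "tl_ch d N \<in> desc_chains le A"
  using assms unfolding desc_chains_def tl_ch_def by auto

lemma tl_equiv: assumes "d \<in> desc_chains le B" "B \<subseteq> H" shows "chain_equiv le d (tl_ch d N)"
  unfolding chain_equiv_def dominates_def tl_ch_def
proof (intro conjI allI)
  fix m show "\<exists>n. le (d n) (d (m + N))" using refl[OF dc_H[OF assms]] by blast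
next
  fix m show "\<exists>n. le (d (n + N)) (d m)" using dc_mono[OF assms] by (metis le_add1)
qed

lemma eq_refl: "c \<in> desc_chains le B \<Longrightarrow> B \<subseteq> H \<Longrightarrow> chain_equiv le c c"
  unfolding chain_equiv_def dominates_def using refl[OF dc_H] by blast
lemma eq_sym: "chain_equiv le c d \<Longrightarrow> chain_equiv le d c"
  unfolding chain_equiv_def by simp
lemma dom_trans: assumes "c \<in> desc_chains le B" "d \<in> desc_chains le B" "e \<in> desc_chains le B" "B \<subseteq> H"
   "dominates le c d" "dominates le d e" shows "dominates le c e"
  unfolding dominates_def
proof
  fix m
  obtain n where n: "le (d n) (e m)" using assms(6) unfolding dominates_def by blast
  obtain k where k: "le (c k) (d n)" using assms(5) unfolding dominates_def by blast
  have "le (c k) (e m)" using trans[OF dc_H[OF assms(1,4)] dc_H[OF assms(2,4)] dc_H[OF assms(3,4)] k n] .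
  then show "\<exists>k. le (c k) (e m)" by blast
qed
lemma eq_trans: assumes "c \<in> desc_chains le B" "d \<in> desc_chains le B" "e \<in> desc_chains le B" "B \<subseteq> H"
   "chain_equiv le c d" "chain_equiv le d e" shows "chain_equiv le c e"
  using assms dom_trans[OF assms(1,2,3,4)] dom_trans[OF assms(3,2,1,4)] unfolding chain_equiv_def by blast

lemma cls_eq: assumes "c \<in> desc_chains le B" "d \<in> desc_chains le B" "B \<subseteq> H"
  shows "cls B c = cls B d \<longleftrightarrow> chain_equiv le c d"
proof
  assume "cls B c = cls B d"
  then have "d \<in> cls B c" using eq_refl[OF assms(2,3)] assms(2) unfolding cls_def by blast
  then show "chain_equiv le c d" unfolding cls_def by blast
next
  assume "chain_equiv le c d"
  then show "cls B c = cls B d" unfolding cls_def using eq_trans[OF assms(2) assms(1) _ assms(3)] eq_trans[OF assms(1) assms(2) _ assms(3)] eq_sym by blast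
qed

lemma classes_bij: assumes "A \<subseteq> B" "B \<subseteq> H"
  shows "bij_betw (\<lambda>X. {d \<in> desc_chains le B. \<exists>c\<in>X. chain_equiv le c d}) (chain_classes le A) (cls B ` desc_chains le A)"
proof -
  let ?f = "\<lambda>X. {d \<in> desc_chains le B. \<exists>c\<in>X. chain_equiv le c d}"
  have AH: "A \<subseteq> H" using assms by blast
  have sub: "desc_chains le A \<subseteq> desc_chains le B" using dc_sub[OF assms(1)] .
  have fc: "?f (cls A c) = cls B c" if c: "c \<in> desc_chains le A" for c
  proof -
    have cB: "c \<in> desc_chains le B" using c sub by blast
    show ?thesis unfolding cls_def
    proof (intro set_eqI iffI)
      fix d assume "d \<in> {d \<in> desc_chains le B. \<exists>c'\<in>{d \<in> desc_chains le A. chain_equiv le c d}. chain_equiv le c' d}"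
      then obtain c' where "d \<in> desc_chains le B" "c' \<in> desc_chains le A" "chain_equiv le c c'" "chain_equiv le c' d" by blast
      then show "d \<in> {d \<in> desc_chains le B. chain_equiv le c d}" using eq_trans[OF cB _ _ assms(2)] sub by blast
    next
      fix d assume "d \<in> {d \<in> desc_chains le B. chain_equiv le c d}"
      then show "d \<in> {d \<in> desc_chains le B. \<exists>c'\<in>{d \<in> desc_chains le A. chain_equiv le c d}. chain_equiv le c' d}"
        using c eq_refl[OF c AH] by blast
    qed
  qed
  show ?thesis unfolding bij_betw_def
  proof
    show "inj_on ?f (chain_classes le A)"
    proof (rule inj_onI)
      fix X Y assume X: "X \<in> chain_classes le A" and Y: "Y \<in> chain_classes le A" and e: "?f X = ?f Y"
      obtain c where c: "c \<in> desc_chains le A" "X = cls A c" using X chain_classes_eq by auto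
      obtain d where d: "d \<in> desc_chains le A" "Y = cls A d" using Y chain_classes_eq by auto
      have "cls B c = cls B d" using e c d fc by simp
      then have "chain_equiv le c d" using cls_eq[of c B d] c d sub assms(2) by blast
      then show "X = Y" using c d cls_eq[OF c(1) d(1) AH] by simp
    qed
  next
    show "?f ` chain_classes le A = cls B ` desc_chains le A"
      using fc unfolding chain_classes_eq by (auto simp: image_iff)
  qed
qed

lemma classes_card: assumes "A \<subseteq> B" "B \<subseteq> H"
  shows "finite (chain_classes le A) \<longleftrightarrow> finite (cls B ` desc_chains le A)"
    "card (chain_classes le A) = card (cls B ` desc_chains le A)"
  using bij_betw_finite[OF classes_bij[OF assms]] bij_betw_same_card[OF classes_bij[OF assms]] by auto

lemma tail_image: assumes "A \<subseteq> B" "B \<subseteq> H" "\<forall>d\<in>desc_chains le B. \<exists>N. \<forall>m\<ge>N. d m \<in> A"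
  shows "cls B ` desc_chains le A = chain_classes le B"
proof
  show "cls B ` desc_chains le A \<subseteq> chain_classes le B"
    unfolding chain_classes_eq using dc_sub[OF assms(1)] by blast
next
  show "chain_classes le B \<subseteq> cls B ` desc_chains le A"
  proof
    fix X assume "X \<in> chain_classes le B"
    then obtain d where d: "d \<in> desc_chains le B" "X = cls B d" unfolding chain_classes_eq by blast
    obtain N where N: "\<forall>m\<ge>N. d m \<in> A" using assms(3) d(1) by blast
    have t: "tl_ch d N \<in> desc_chains le A" using tl_dc[OF d(1) N] .
    have "cls B d = cls B (tl_ch d N)"
      using cls_eq[OF d(1) _ assms(2)] tl_equiv[OF d(1) assms(2)] t dc_sub[OF assms(1)] by blast
    then show "X \<in> cls B ` desc_chains le A" using d t by blast
  qed
qed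

lemma tail_classes: assumes "A \<subseteq> B" "B \<subseteq> H" "\<forall>d\<in>desc_chains le B. \<exists>N. \<forall>m\<ge>N. d m \<in> A"
  shows "finite (chain_classes le A) \<longleftrightarrow> finite (chain_classes le B)"
    "card (chain_classes le A) = card (chain_classes le B)"
  using classes_card[OF assms(1,2)] tail_image[OF assms] by auto

lemma almost_eq_classes: assumes "ultrafilter H le st \<eta>" "ultrafilter H le st \<eta>'" "almost_eq \<eta> \<eta>'"
  shows "finite (chain_classes le \<eta>) \<longleftrightarrow> finite (chain_classes le \<eta>')"
    "card (chain_classes le \<eta>) = card (chain_classes le \<eta>')"
proof -
  have tl: "\<forall>d\<in>desc_chains le B. \<exists>N. \<forall>m\<ge>N. d m \<in> B \<inter> C"
    if "B \<subseteq> H" "finite (B - C)" for B C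
  proof
    fix d assume d: "d \<in> desc_chains le B"
    have "finite (d -` (B - C))" using finite_vimageI[OF that(2) dc_inj[OF d that(1)]] .
    then obtain N where N: "\<forall>m\<in>d -` (B - C). m < N" using finite_nat_set_iff_bounded by blast
    have "\<forall>m\<ge>N. d m \<in> B \<inter> C"
    proof (intro allI impI)
      fix m assume "N \<le> m"
      then have "m \<notin> d -` (B - C)" using N by (meson not_less)
      moreover have "d m \<in> B" using d unfolding desc_chains_def by blast
      ultimately show "d m \<in> B \<inter> C" by blast
    qed
    then show "\<exists>N. \<forall>m\<ge>N. d m \<in> B \<inter> C" by blast
  qed
  have H1: "\<eta> \<subseteq> H" "\<eta>' \<subseteq> H" using assms uf_sub by auto
  have f1: "finite (\<eta> - \<eta>')" "finite (\<eta>' - \<eta>)" using assms(3) unfolding almost_eq_def by auto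
  have a: "finite (chain_classes le (\<eta> \<inter> \<eta>')) \<longleftrightarrow> finite (chain_classes le \<eta>)"
    "card (chain_classes le (\<eta> \<inter> \<eta>')) = card (chain_classes le \<eta>)"
    using tail_classes[of "\<eta> \<inter> \<eta>'" \<eta>] tl[OF H1(1) f1(1)] H1 by auto
  have b: "finite (chain_classes le (\<eta> \<inter> \<eta>')) \<longleftrightarrow> finite (chain_classes le \<eta>')"
    "card (chain_classes le (\<eta> \<inter> \<eta>')) = card (chain_classes le \<eta>')"
    using tail_classes[of "\<eta> \<inter> \<eta>'" \<eta>'] tl[OF H1(2) f1(2)] H1 by (auto simp: Int_commute)
  show "finite (chain_classes le \<eta>) \<longleftrightarrow> finite (chain_classes le \<eta>')"
    "card (chain_classes le \<eta>) = card (chain_classes le \<eta>')" using a b by auto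
qed

end
context PS begin

lemma top_not_below: "g \<in> H \<Longrightarrow> g \<noteq> st z \<Longrightarrow> \<not> le (st z) g"
  using antisym[OF _ stH[OF zH]] le_stz by blast

lemma flip_uf:
  assumes uf: "ultrafilter H le st \<xi>" and g: "g \<in> \<xi>" "g \<noteq> st z"
  shows "ultrafilter H le st ((\<xi> - {h\<in>\<xi>. le h g}) \<union> st ` {h\<in>\<xi>. le h g})"
proof -
  let ?D = "{h\<in>\<xi>. le h g}"
  let ?E = "(\<xi> - ?D) \<union> st ` ?D"
  have xH: "\<xi> \<subseteq> H" using uf_sub[OF uf] .
  have gH: "g \<in> H" using g xH by blast
  have mem: "x \<in> ?E \<longleftrightarrow> (x \<in> \<xi> \<and> x \<notin> ?D) \<or> st x \<in> ?D" if x: "x \<in> H" for x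
  proof
    assume "x \<in> ?E"
    then show "(x \<in> \<xi> \<and> x \<notin> ?D) \<or> st x \<in> ?D"
    proof
      assume "x \<in> st ` ?D"
      then obtain h where "h \<in> ?D" "x = st h" by blast
      then have "st x = h" using stst xH by blast
      then show ?thesis using \<open>h \<in> ?D\<close> by blast
    qed blast
  next
    assume "(x \<in> \<xi> \<and> x \<notin> ?D) \<or> st x \<in> ?D"
    then show "x \<in> ?E"
    proof
      assume "st x \<in> ?D"
      then have "st (st x) \<in> st ` ?D" by blast
      then show ?thesis using stst[OF x] by simp
    qed blast
  qed
  have sub: "?E \<subseteq> H" using xH stH by blast
  have xor: "(x \<in> ?E) \<noteq> (st x \<in> ?E)" if x: "x \<in> H" for x
  proof -
    have sx: "st x \<in> H" using stH[OF x] .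
    have m1: "x \<in> ?E \<longleftrightarrow> (x \<in> \<xi> \<and> x \<notin> ?D) \<or> st x \<in> ?D" using mem[OF x] .
    have m2: "st x \<in> ?E \<longleftrightarrow> (st x \<in> \<xi> \<and> st x \<notin> ?D) \<or> x \<in> ?D" using mem[OF sx] stst[OF x] by simp
    have "(x \<in> \<xi>) \<noteq> (st x \<in> \<xi>)" using uf_xor[OF uf x] .
    then show ?thesis using m1 m2 by blast
  qed
  have cons: "\<not> le h (st k)" if h: "h \<in> ?E" and k: "k \<in> ?E" for h k
  proof
    assume hk: "le h (st k)"
    have hH: "h \<in> H" and kH: "k \<in> H" using h k sub by blast+
    show False
    proof (cases "h \<in> st ` ?D")
      case False
      then have h1: "h \<in> \<xi>" "h \<notin> ?D" using h by blast+
      show False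
      proof (cases "k \<in> st ` ?D")
        case False
        then have "k \<in> \<xi>" using k by blast
        then show False using uf_cons[OF uf h1(1)] hk by blast
      next
        case True
        then obtain g' where g': "g' \<in> ?D" "k = st g'" by blast
        have g'H: "g' \<in> H" using g' xH by blast
        have "st k = g'" using g' stst[OF g'H] by simp
        then have "le h g" using hk g' trans[OF hH g'H gH] by auto
        then show False using h1 by blast
      qed
    next
      case True
      then obtain a where a: "a \<in> ?D" "h = st a" by blast
      have aH: "a \<in> H" using a xH by blast
      show False
      proof (cases "k \<in> st ` ?D")
        case False
        then have k1: "k \<in> \<xi>" "k \<notin> ?D" using k by blast+
        have "le (st a) (st k)" using hk a by simp
        then have "le k a" using strev_iff[OF kH aH] by simp
        then have "le k g" using trans[OF kH aH gH] a by blast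
        then show False using k1 by blast
      next
        case True
        then obtain b where b: "b \<in> ?D" "k = st b" by blast
        have bH: "b \<in> H" using b xH by blast
        have "le (st a) b" using hk a b stst[OF bH] by simp
        then have 1: "le (st a) g" using trans[OF stH[OF aH] bH gH] b by blast
        have "le (st g) (st a)" using strev[OF aH gH] a by blast
        then have "le (st g) g" using trans[OF stH[OF gH] stH[OF aH] gH] 1 by blast
        then have "le (st g) (st (st g))" using stst[OF gH] by simp
        then have "st g = z" using lest[OF stH[OF gH]] by blast
        then have "g = st z" using stst[OF gH] by metis
        then show False using g by blast
      qed
    qed
  qed
  show ?thesis unfolding ultrafilter_def using sub xor cons by blast
qed

lemma chain_tail_above:
  assumes uf: "ultrafilter H le st \<eta>" and e: "e \<in> desc_chains le \<eta>"
    and g: "g \<in> H" "g \<noteq> z" "g \<noteq> st z"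
  shows "\<exists>N. \<forall>m\<ge>N. \<not> le g (e m)"
proof (rule ccontr)
  assume "\<not> ?thesis"
  then have a: "\<forall>N. \<exists>m\<ge>N. le g (e m)" by blast
  have xH: "\<eta> \<subseteq> H" using uf_sub[OF uf] .
  have all: "le g (e m)" for m
  proof -
    obtain m' where "m' \<ge> m" "le g (e m')" using a by blast
    then show ?thesis using trans[OF g(1) dc_H[OF e xH] dc_H[OF e xH]] dc_mono[OF e xH] by blast
  qed
  have e1: "e 1 \<in> H" "e 1 \<noteq> z" "e 1 \<noteq> st z"
    using dc_H[OF e xH] uf_z[OF uf] dc_not_top[OF e xH, of 1] e unfolding desc_chains_def by auto
  have "e ` {1..} \<subseteq> {x\<in>H. le g x \<and> le x (e 1)}"
    using all dc_mono[OF e xH] dc_H[OF e xH] by auto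
  moreover have "finite {x\<in>H. le g x \<and> le x (e 1)}" using fin_int[OF g(1) e1(1) g(2,3) e1(2,3)] .
  moreover have "infinite (e ` {1..})" using dc_infinite[OF e xH] infinite_Ici by blast
  ultimately show False using finite_subset by blast
qed

lemma chain_in_below:
  assumes uf: "ultrafilter H le st \<xi>" and g: "g \<in> \<xi>" "g \<noteq> st z"
    and T: "T \<subseteq> {h\<in>\<xi>. le h g}" "infinite T"
  shows "\<exists>e\<in>desc_chains le \<xi>. range e \<subseteq> T"
proof -
  have xH: "\<xi> \<subseteq> H" using uf_sub[OF uf] .
  have gH: "g \<in> H" using g xH by blast
  define f where "f X = (if \<forall>a\<in>X. \<forall>b\<in>X. le a b \<or> le b a then 0 else 1::nat)" for X
  have "\<forall>x\<in>T. \<forall>y\<in>T. x \<noteq> y \<longrightarrow> f {x, y} < 2" unfolding f_def by auto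
  from Ramsey2[OF T(2) this] obtain Y t where Y: "Y \<subseteq> T" "infinite Y" "t < 2"
    and col: "\<forall>x\<in>Y. \<forall>y\<in>Y. x \<noteq> y \<longrightarrow> f {x, y} = t" by blast
  have YH: "Y \<subseteq> H" using Y T xH by blast
  show ?thesis
  proof (cases "t = 0")
    case False
    then have t1: "t = 1" using Y(3) by simp
    have tr: "transverse le st x y" if x: "x \<in> Y" and y: "y \<in> Y" and xy: "x \<noteq> y" for x y
    proof -
      have "f {x, y} = 1" using col x y xy t1 by blast
      have xH': "x \<in> H" and yH': "y \<in> H" using x y YH by blast+
      have nc: "\<not> le x y" "\<not> le y x" using \<open>f {x, y} = 1\<close> refl[OF xH'] refl[OF yH'] unfolding f_def by (auto split: if_splits)
      have xi: "x \<in> \<xi>" "le x g" and yi: "y \<in> \<xi>" "le y g" using x y Y T by blast+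
      have n3: "\<not> le x (st y)" using uf_cons[OF uf xi(1) yi(1)] .
      have n4: "\<not> le (st x) (st y)" using nc(2) strev_iff[OF yH' xH'] by simp
      have n2: "\<not> le (st x) y"
      proof
        assume "le (st x) y"
        then have "le (st y) (st (st x))" using strev[OF stH[OF xH'] yH'] by blast
        then have 1: "le (st y) x" using stst[OF xH'] by simp
        have 2: "le (st g) (st y)" using strev[OF yH' gH yi(2)] .
        have "le (st g) x" using trans[OF stH[OF gH] stH[OF yH'] xH' 2 1] .
        then have "le (st g) g" using trans[OF stH[OF gH] xH' gH _ xi(2)] by blast
        then have "le (st g) (st (st g))" using stst[OF gH] by simp
        then have "st g = z" using lest[OF stH[OF gH]] by blast
        then have "g = st z" using stst[OF gH] by metis
        then show False using g by blast
      qed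
      show ?thesis unfolding transverse_def using nc n2 n3 n4 by blast
    qed
    then have "\<exists>T. T \<subseteq> H \<and> infinite T \<and> (\<forall>h\<in>T. \<forall>k\<in>T. h \<noteq> k \<longrightarrow> transverse le st h k)"
      using YH Y(2) by blast
    then show ?thesis using omd unfolding omega_dimensional_def by blast
  next
    case True
    have comp: "le x y \<or> le y x" if x: "x \<in> Y" and y: "y \<in> Y" for x y
    proof (cases "x = y")
      case True then show ?thesis using refl x YH by blast
    next
      case False
      then have "f {x, y} = 0" using col x y True by blast
      then show ?thesis unfolding f_def by (auto split: if_splits)
    qed
    have step: "\<exists>y'. y' \<in> Y \<and> le y' y \<and> y' \<noteq> y" if y: "y \<in> Y" for y
    proof -
      have yH': "y \<in> H" using y YH by blast
      have yi: "y \<in> \<xi>" "le y g" using y Y T by blast+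
      have yz: "y \<noteq> z" using uf_z[OF uf] yi by blast
      have yt: "y \<noteq> st z" using top_not_below[OF gH g(2)] yi by blast
      have gz: "g \<noteq> z" using uf_z[OF uf] g by blast
      have "{x\<in>Y. le y x} \<subseteq> {x\<in>H. le y x \<and> le x g}"
      proof
        fix x assume "x \<in> {x\<in>Y. le y x}"
        then have "x \<in> Y" "le y x" by auto
        then have "x \<in> T" "x \<in> H" using Y(1) YH by auto
        then have "le x g" using T(1) by auto
        then show "x \<in> {x\<in>H. le y x \<and> le x g}" using \<open>x \<in> H\<close> \<open>le y x\<close> by simp
      qed
      then have "finite {x\<in>Y. le y x}" using fin_int[OF yH' gH yz yt gz g(2)] finite_subset by blast
      then have "Y - {x\<in>Y. le y x} \<noteq> {}" using Y(2) by (metis Diff_eq_empty_iff rev_finite_subset)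
      then obtain y' where y': "y' \<in> Y" "\<not> le y y'" by blast
      then have "le y' y" using comp[OF y' (1) y] by blast
      moreover have "y' \<noteq> y" using y' refl yH' by blast
      ultimately show ?thesis using y' by blast
    qed
    obtain y0 where y0: "y0 \<in> Y" using Y(2) by (metis finite.emptyI ex_in_conv)
    define e where "e = rec_nat y0 (\<lambda>_ y. SOME y'. y' \<in> Y \<and> le y' y \<and> y' \<noteq> y)"
    have e0: "e 0 = y0" unfolding e_def by simp
    have eS: "e (Suc n) = (SOME y'. y' \<in> Y \<and> le y' (e n) \<and> y' \<noteq> e n)" for n unfolding e_def by simp
    have eY: "e n \<in> Y" for n
    proof (induction n)
      case 0 then show ?case using e0 y0 by simp
    next
      case (Suc n)
      show ?case using someI_ex[OF step[OF Suc]] eS[of n] by simp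
    qed
    have es: "le (e (Suc n)) (e n) \<and> e (Suc n) \<noteq> e n" for n
      using someI_ex[OF step[OF eY[of n]]] eS[of n] by simp
    have "e \<in> desc_chains le \<xi>" unfolding desc_chains_def using es eY Y T by blast
    moreover have "range e \<subseteq> T" using eY Y by blast
    ultimately show ?thesis by blast
  qed
qed

end
context PS begin

lemma cls_sub: "cls B c \<subseteq> desc_chains le B" unfolding cls_def by blast
lemma cls_self: "c \<in> desc_chains le B \<Longrightarrow> B \<subseteq> H \<Longrightarrow> c \<in> cls B c"
  unfolding cls_def using eq_refl by blast

lemma main:
  assumes uf: "ultrafilter H le st \<xi>" and fin: "finite (chain_classes le \<xi>)"
    and ne: "chain_classes le \<xi> \<noteq> {}"
  shows "\<exists>\<eta>. ultrafilter H le st \<eta> \<and> \<not> almost_eq \<xi> \<eta>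
     \<and> (\<forall>F. finite F \<and> F \<subseteq> H \<longrightarrow> (\<exists>\<eta>'. ultrafilter H le st \<eta>' \<and> almost_eq \<eta> \<eta>' \<and> \<eta>' \<inter> F = \<xi> \<inter> F))
     \<and> finite (chain_classes le \<eta>) \<and> card (chain_classes le \<eta>) = card (chain_classes le \<xi>) - 1"
proof -
  have xH: "\<xi> \<subseteq> H" using uf_sub[OF uf] .
  let ?D = "desc_chains le \<xi>"
  define Up where "Up c = {X \<in> chain_classes le \<xi>. \<exists>d\<in>X. dominates le d c}" for c
  obtain c0 where c0: "c0 \<in> ?D" using ne unfolding chain_classes_eq by blast
  obtain c where c: "c \<in> ?D" and cmin: "\<forall>c'. c' \<in> ?D \<longrightarrow> card (Up c) \<le> card (Up c')"
    using ex_has_least_nat[of "\<lambda>c. c \<in> ?D" c0 "\<lambda>c. card (Up c)"] c0 by blast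
  have maxc: "dominates le c d" if d: "d \<in> ?D" and dc: "dominates le d c" for d
  proof (rule ccontr)
    assume ncd: "\<not> dominates le c d"
    have "Up d \<subseteq> Up c"
    proof
      fix X assume "X \<in> Up d"
      then obtain e where X: "X \<in> chain_classes le \<xi>" "e \<in> X" "dominates le e d" unfolding Up_def by blast
      have eD: "e \<in> ?D" using X(1,2) cls_sub unfolding chain_classes_eq by blast
      have "dominates le e c" using dom_trans[OF eD d c xH X(3) dc] .
      then show "X \<in> Up c" using X unfolding Up_def by blast
    qed
    moreover have "cls \<xi> c \<in> Up c"
    proof -
      have "cls \<xi> c \<in> chain_classes le \<xi>" using c unfolding chain_classes_eq by blast
      moreover have "c \<in> cls \<xi> c" using cls_self[OF c xH] .
      moreover have "dominates le c c" using eq_refl[OF c xH] unfolding chain_equiv_def by blast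
      ultimately show ?thesis unfolding Up_def by blast
    qed
    moreover have "cls \<xi> c \<notin> Up d"
    proof
      assume "cls \<xi> c \<in> Up d"
      then obtain e where e: "e \<in> cls \<xi> c" "dominates le e d" unfolding Up_def by blast
      have eD: "e \<in> ?D" and ce: "chain_equiv le c e" using e(1) unfolding cls_def by blast+
      have "dominates le c e" using ce unfolding chain_equiv_def by blast
      then have "dominates le c d" using dom_trans[OF c eD d xH _ e(2)] by blast
      then show False using ncd by blast
    qed
    ultimately have "Up d \<subset> Up c" by blast
    moreover have "finite (Up c)" using fin unfolding Up_def by simp
    ultimately have "card (Up d) < card (Up c)" using psubset_card_mono by blast
    then show False using cmin d by (meson not_less)
  qed
  define Q where "Q X k = (\<forall>d\<in>X \<inter> ?D. \<forall>m. \<not> le (d m) (c k))" for X k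
  have cle: "le (c k') (c k)" if "k \<le> k'" for k k' using dc_mono[OF c xH that] .
  have cH: "c k \<in> H" for k using dc_H[OF c xH] .
  have Qmono: "Q X k'" if "Q X k" "k \<le> k'" for X k k'
    unfolding Q_def
  proof (intro ballI allI notI)
    fix d m assume d: "d \<in> X \<inter> ?D" and l: "le (d m) (c k')"
    have dD: "d \<in> ?D" using d by blast
    have "le (d m) (c k)" using trans[OF dc_H[OF dD xH] cH cH l cle[OF that(2)]] .
    then show False using that(1) d unfolding Q_def by blast
  qed
  have Qex: "\<forall>X \<in> chain_classes le \<xi> - {cls \<xi> c}. \<exists>k. Q X k"
  proof
    fix X assume X: "X \<in> chain_classes le \<xi> - {cls \<xi> c}"
    then obtain d0 where d0: "d0 \<in> ?D" "X = cls \<xi> d0" unfolding chain_classes_eq by blast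
    have "\<not> chain_equiv le c d0" using cls_eq[OF c d0(1) xH] d0 X by blast
    then have "\<not> dominates le d0 c" using maxc[OF d0(1)] unfolding chain_equiv_def by blast
    then obtain k where k: "\<forall>m. \<not> le (d0 m) (c k)" unfolding dominates_def by blast
    have "Q X k" unfolding Q_def
    proof (intro ballI allI notI)
      fix d m assume d: "d \<in> X \<inter> ?D" and l: "le (d m) (c k)"
      have "dominates le d0 d" using d d0 unfolding cls_def chain_equiv_def by blast
      then obtain n where "le (d0 n) (d m)" unfolding dominates_def by blast
      moreover have dD: "d \<in> ?D" using d by blast
      ultimately have "le (d0 n) (c k)" using trans[OF dc_H[OF d0(1) xH] dc_H[OF dD xH] cH _ l] by blast
      then show False using k by blast
    qed
    then show "\<exists>k. Q X k" by blast
  qed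
  obtain K where K1: "K \<ge> 1" and KQ: "\<forall>X \<in> chain_classes le \<xi> - {cls \<xi> c}. Q X K"
    using finite_uniform[of "chain_classes le \<xi> - {cls \<xi> c}" Q 1] fin Qex Qmono by blast
  have keyK: "\<not> le (d m) (c k)" if d: "d \<in> ?D" "\<not> chain_equiv le c d" and k: "k \<ge> K" for d m k
  proof
    assume l: "le (d m) (c k)"
    have "cls \<xi> d \<noteq> cls \<xi> c" using cls_eq[OF d(1) c xH] d(2) eq_sym by blast
    moreover have "cls \<xi> d \<in> chain_classes le \<xi>" using d(1) unfolding chain_classes_eq by blast
    ultimately have "Q (cls \<xi> d) K" using KQ by blast
    moreover have "d \<in> cls \<xi> d \<inter> ?D" using cls_self[OF d(1) xH] d(1) by blast
    moreover have "le (d m) (c K)" using trans[OF dc_H[OF d(1) xH] cH cH l cle[OF k]] .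
    ultimately show False unfolding Q_def by blast
  qed
  have cxi: "c k \<in> \<xi>" for k using c unfolding desc_chains_def by blast
  have cnt: "c k \<noteq> st z" if "k \<ge> 1" for k using dc_not_top[OF c xH that] .
  have cnz: "c k \<noteq> z" for k using uf_z[OF uf] cxi by metis
  define Dn where "Dn k = {h\<in>\<xi>. le h (c k)}" for k
  have Sfin: "finite (Dn k - Dn (Suc k))" if k: "k \<ge> K" for k
  proof (rule ccontr)
    assume inf: "infinite (Dn k - Dn (Suc k))"
    have "Dn k - Dn (Suc k) \<subseteq> {h\<in>\<xi>. le h (c k)}" unfolding Dn_def by blast
    from chain_in_below[OF uf cxi cnt this inf] K1 k
    obtain e where e: "e \<in> ?D" "range e \<subseteq> Dn k - Dn (Suc k)" by auto
    show False
    proof (cases "chain_equiv le c e")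
      case True
      then obtain n where n: "le (e n) (c (Suc k))" unfolding chain_equiv_def dominates_def by blast
      have "e n \<in> \<xi>" "e n \<notin> Dn (Suc k)" using e(2) unfolding Dn_def by blast+
      then show False using n unfolding Dn_def by blast
    next
      case False
      have "\<not> le (e 0) (c k)" using keyK[OF e(1) False k] .
      moreover have "e 0 \<in> Dn k" using e(2) by blast
      ultimately show False unfolding Dn_def by blast
    qed
  qed
  have Dfin: "finite (Dn K - Dn (K + i))" for i
  proof (induction i)
    case 0 then show ?case by simp
  next
    case (Suc i)
    have "Dn K - Dn (K + Suc i) \<subseteq> (Dn K - Dn (K + i)) \<union> (Dn (K + i) - Dn (Suc (K + i)))" by auto
    then show ?case using Suc Sfin[of "K + i"] finite_subset by auto
  qed
  have Dmono: "Dn k' \<subseteq> Dn k" if "k \<le> k'" for k k'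
  proof
    fix h assume "h \<in> Dn k'"
    then have h: "h \<in> \<xi>" "le h (c k')" unfolding Dn_def by blast+
    have "h \<in> H" using h xH by blast
    then have "le h (c k)" using trans[OF _ cH cH h(2) cle[OF that]] by blast
    then show "h \<in> Dn k" using h unfolding Dn_def by blast
  qed
  define eta where "eta k = (\<xi> - Dn k) \<union> st ` Dn k" for k
  have etauf: "ultrafilter H le st (eta k)" if "k \<ge> 1" for k
    unfolding eta_def Dn_def using flip_uf[OF uf cxi cnt[OF that]] .
  have etaeq: "almost_eq (eta K) (eta k)" if k: "k \<ge> K" for k
  proof -
    have sub: "Dn k \<subseteq> Dn K" using Dmono[OF k] .
    have "(eta K - eta k) \<union> (eta k - eta K) \<subseteq> (Dn K - Dn k) \<union> st ` (Dn K - Dn k)"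
      unfolding eta_def using sub by blast
    moreover have "finite (Dn K - Dn k)" using Dfin[of "k - K"] k by simp
    ultimately show ?thesis unfolding almost_eq_def using finite_subset by blast
  qed
  have noteq: "\<not> almost_eq \<xi> (eta K)"
  proof
    assume a: "almost_eq \<xi> (eta K)"
    have "Dn K \<subseteq> \<xi> - eta K"
    proof
      fix h assume h: "h \<in> Dn K"
      have hx: "h \<in> \<xi>" using h unfolding Dn_def by blast
      have "h \<notin> st ` Dn K"
      proof
        assume "h \<in> st ` Dn K"
        then obtain g where g: "g \<in> Dn K" "h = st g" by blast
        have gx: "g \<in> \<xi>" using g unfolding Dn_def by blast
        have "st h = g" using g stst xH gx by blast
        then show False using uf_xor[OF uf, of h] hx gx xH by blast
      qed
      then show "h \<in> \<xi> - eta K" unfolding eta_def using h hx by blast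
    qed
    moreover have "c ` {K..} \<subseteq> Dn K" unfolding Dn_def using cxi cle by blast
    moreover have "infinite (c ` {K..})" using dc_infinite[OF c xH] infinite_Ici by blast
    ultimately have "infinite (\<xi> - eta K)" by (meson infinite_super subset_trans)
    moreover have "finite (\<xi> - eta K)" using a unfolding almost_eq_def by simp
    ultimately show False by blast
  qed
  have evt: "\<exists>k. \<not> le h (c k)" if h: "h \<in> \<xi>" for h
  proof (rule ccontr)
    assume "\<not> ?thesis"
    then have all: "\<forall>k. le h (c k)" by blast
    have hH: "h \<in> H" using h xH by blast
    have hz: "h \<noteq> z" using uf_z[OF uf] h by blast
    have ht: "h \<noteq> st z" using all top_not_below[OF cH cnt[of 1]] by blast
    have "c ` {1..} \<subseteq> {x\<in>H. le h x \<and> le x (c 1)}" using all cle cH by auto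
    moreover have "finite {x\<in>H. le h x \<and> le x (c 1)}" using fin_int[OF hH cH hz ht cnz cnt] by simp
    moreover have "infinite (c ` {1..})" using dc_infinite[OF c xH] infinite_Ici by blast
    ultimately show False by (meson infinite_super)
  qed
  have clos: "\<forall>F. finite F \<and> F \<subseteq> H \<longrightarrow> (\<exists>\<eta>'. ultrafilter H le st \<eta>' \<and> almost_eq (eta K) \<eta>' \<and> \<eta>' \<inter> F = \<xi> \<inter> F)"
  proof (intro allI impI)
    fix F assume F: "finite F \<and> F \<subseteq> H"
    let ?G = "(F \<union> st ` F) \<inter> \<xi>"
    have fG: "finite ?G" using F by blast
    have exk: "\<forall>h\<in>?G. \<exists>k. h \<in> ?G \<longrightarrow> \<not> le h (c k)" using evt by blast
    have monoP: "h \<in> ?G \<longrightarrow> \<not> le h (c k')" if "h \<in> ?G \<longrightarrow> \<not> le h (c k)" "k \<le> k'" for h k k'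
    proof (intro impI notI)
      assume hG: "h \<in> ?G" and l: "le h (c k')"
      have "h \<in> H" using hG xH by blast
      then have "le h (c k)" using trans[OF _ cH cH l cle[OF that(2)]] by blast
      then show False using that(1) hG by blast
    qed
    have "\<exists>k\<ge>K. \<forall>h\<in>?G. h \<in> ?G \<longrightarrow> \<not> le h (c k)"
      by (rule finite_uniform[where P="\<lambda>h k. h \<in> ?G \<longrightarrow> \<not> le h (c k)", OF fG exk monoP])
    then obtain k where k: "k \<ge> K" "\<forall>h\<in>?G. \<not> le h (c k)" by blast
    have "eta k \<inter> F = \<xi> \<inter> F"
    proof (intro set_eqI iffI)
      fix x assume x: "x \<in> eta k \<inter> F"
      have xH': "x \<in> H" using x F by blast
      show "x \<in> \<xi> \<inter> F"
      proof (cases "x \<in> st ` Dn k")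
        case True
        then obtain h where h: "h \<in> Dn k" "x = st h" by blast
        have hx: "h \<in> \<xi>" "le h (c k)" using h unfolding Dn_def by blast+
        have hH: "h \<in> H" using hx xH by blast
        have "h = st x" using h(2) stst[OF hH] by simp
        then have "h \<in> st ` F" using x by blast
        then have "h \<in> ?G" using hx by blast
        then show ?thesis using k hx by blast
      next
        case False
        then show ?thesis using x unfolding eta_def by blast
      qed
    next
      fix x assume x: "x \<in> \<xi> \<inter> F"
      then have "x \<in> ?G" by blast
      then have "x \<notin> Dn k" using k unfolding Dn_def by blast
      then show "x \<in> eta k \<inter> F" using x unfolding eta_def by blast
    qed
    then show "\<exists>\<eta>'. ultrafilter H le st \<eta>' \<and> almost_eq (eta K) \<eta>' \<and> \<eta>' \<inter> F = \<xi> \<inter> F"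
      using etauf[of k] etaeq[OF k(1)] k K1 by auto
  qed
  let ?A = "\<xi> - Dn K"
  have eKuf: "ultrafilter H le st (eta K)" using etauf[OF K1] .
  have eKH: "eta K \<subseteq> H" using uf_sub[OF eKuf] .
  have AeK: "?A \<subseteq> eta K" unfolding eta_def by blast
  have tail: "\<forall>e\<in>desc_chains le (eta K). \<exists>N. \<forall>m\<ge>N. e m \<in> ?A"
  proof
    fix e assume e: "e \<in> desc_chains le (eta K)"
    have g1: "st (c K) \<in> H" using stH[OF cH] .
    have g2: "st (c K) \<noteq> z"
    proof
      assume "st (c K) = z"
      then have "st (st (c K)) = st z" by simp
      then have "c K = st z" using stst[OF cH] by simp
      then show False using cnt[OF K1] by blast
    qed
    have g3: "st (c K) \<noteq> st z"
    proof
      assume "st (c K) = st z"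
      then have "st (st (c K)) = st (st z)" by simp
      then have "c K = z" using stst[OF cH] stst[OF zH] by simp
      then show False using cnz by blast
    qed
    note g = g1 g2 g3
    obtain N where N: "\<forall>m\<ge>N. \<not> le (st (c K)) (e m)" using chain_tail_above[OF eKuf e g] by blast
    have "\<forall>m\<ge>N. e m \<in> ?A"
    proof (intro allI impI)
      fix m assume m: "m \<ge> N"
      have em: "e m \<in> eta K" using e unfolding desc_chains_def by blast
      have "e m \<notin> st ` Dn K"
      proof
        assume "e m \<in> st ` Dn K"
        then obtain h where h: "h \<in> Dn K" "e m = st h" by blast
        have "h \<in> H" "le h (c K)" using h xH unfolding Dn_def by blast+
        then have "le (st (c K)) (e m)" using strev[OF _ cH] h by simp
        then show False using N m by blast
      qed
      then show "e m \<in> ?A" using em unfolding eta_def by blast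
    qed
    then show "\<exists>N. \<forall>m\<ge>N. e m \<in> ?A" by blast
  qed
  have t1: "finite (chain_classes le ?A) \<longleftrightarrow> finite (chain_classes le (eta K))"
    "card (chain_classes le ?A) = card (chain_classes le (eta K))"
    using tail_classes[OF AeK eKH tail] by auto
  have img: "cls \<xi> ` desc_chains le ?A = chain_classes le \<xi> - {cls \<xi> c}"
  proof
    show "cls \<xi> ` desc_chains le ?A \<subseteq> chain_classes le \<xi> - {cls \<xi> c}"
    proof
      fix X assume "X \<in> cls \<xi> ` desc_chains le ?A"
      then obtain d where d: "d \<in> desc_chains le ?A" "X = cls \<xi> d" by blast
      have dD: "d \<in> ?D" using d(1) dc_sub[of ?A \<xi>] by blast
      have "X \<noteq> cls \<xi> c"
      proof
        assume "X = cls \<xi> c"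
        then have "chain_equiv le d c" using cls_eq[OF dD c xH] d by blast
        then obtain n where "le (d n) (c K)" unfolding chain_equiv_def dominates_def by blast
        moreover have "d n \<in> ?A" using d(1) unfolding desc_chains_def by blast
        ultimately show False unfolding Dn_def by blast
      qed
      then show "X \<in> chain_classes le \<xi> - {cls \<xi> c}" using d dD unfolding chain_classes_eq by blast
    qed
  next
    show "chain_classes le \<xi> - {cls \<xi> c} \<subseteq> cls \<xi> ` desc_chains le ?A"
    proof
      fix X assume X: "X \<in> chain_classes le \<xi> - {cls \<xi> c}"
      then obtain d where d: "d \<in> ?D" "X = cls \<xi> d" unfolding chain_classes_eq by blast
      have "\<not> chain_equiv le c d" using cls_eq[OF c d(1) xH] d X by blast
      then have "\<forall>m. \<not> le (d m) (c K)" using keyK[OF d(1)] by blast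
      then have "d \<in> desc_chains le ?A" using d(1) unfolding desc_chains_def Dn_def by blast
      then show "X \<in> cls \<xi> ` desc_chains le ?A" using d by blast
    qed
  qed
  have t2: "finite (chain_classes le ?A)" "card (chain_classes le ?A) = card (chain_classes le \<xi>) - 1"
  proof -
    have c2: "finite (chain_classes le ?A) \<longleftrightarrow> finite (cls \<xi> ` desc_chains le ?A)"
      "card (chain_classes le ?A) = card (cls \<xi> ` desc_chains le ?A)"
      using classes_card[of ?A \<xi>] xH by auto
    have cin: "cls \<xi> c \<in> chain_classes le \<xi>" using c unfolding chain_classes_eq by blast
    show "finite (chain_classes le ?A)" using c2 img fin by simp
    show "card (chain_classes le ?A) = card (chain_classes le \<xi>) - 1"
      using c2 img card_Diff_singleton[OF cin] by simp
  qed
  show ?thesis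
    apply (rule exI[of _ "eta K"])
    using eKuf noteq clos t1 t2 by simp
qed

end

theorem mainTheorem17:
  fixes H :: "'a set" and le :: "'a \<Rightarrow> 'a \<Rightarrow> bool" and z :: 'a and st :: "'a \<Rightarrow> 'a"
    and S :: "'a set set" and \<delta> :: nat
  assumes "poc_set H le z st"
    and "discrete_poc H le z st"
    and "omega_dimensional H le st"
    and "S \<in> ReH H le st"
    and "codim le S = enat \<delta>"
    and "\<delta> > 0"
  shows "\<exists>S1 \<in> ReH H le st. Re_less H le st S1 S \<and> codim le S1 = enat (\<delta> - 1)"
proof -
  interpret PS H le z st using assms(1-3) by unfold_locales
  obtain \<xi>0 where x0: "\<xi>0 \<in> ultrafilters H le st" "S = {\<eta> \<in> ultrafilters H le st. almost_eq \<xi>0 \<eta>}"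
    using assms(4) unfolding ReH_def by blast
  define \<xi> where "\<xi> = (SOME \<xi>. \<xi> \<in> S)"
  have "\<xi>0 \<in> S" using x0 almost_eq_refl by blast
  then have xS: "\<xi> \<in> S" unfolding \<xi>_def by (rule someI)
  have xuf: "ultrafilter H le st \<xi>" using xS x0 unfolding ultrafilters_def by blast
  have a0: "almost_eq \<xi>0 \<xi>" using xS x0 by blast
  have Seq: "S = {\<eta> \<in> ultrafilters H le st. almost_eq \<xi> \<eta>}"
    using x0(2) a0 almost_eq_sym almost_eq_trans by blast
  have cd: "(if finite (chain_classes le \<xi>) then enat (card (chain_classes le \<xi>)) else \<infinity>) = enat \<delta>"
    using assms(5) unfolding codim_def Let_def \<xi>_def by simp
  have fin: "finite (chain_classes le \<xi>)" and crd: "card (chain_classes le \<xi>) = \<delta>"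
    using cd by (auto split: if_splits)
  have ne: "chain_classes le \<xi> \<noteq> {}" using crd assms(6) by auto
  obtain \<eta> where uf: "ultrafilter H le st \<eta>" and nae: "\<not> almost_eq \<xi> \<eta>"
    and clos: "\<forall>F. finite F \<and> F \<subseteq> H \<longrightarrow> (\<exists>\<eta>'. ultrafilter H le st \<eta>' \<and> almost_eq \<eta> \<eta>' \<and> \<eta>' \<inter> F = \<xi> \<inter> F)"
    and fin1: "finite (chain_classes le \<eta>)" and crd1: "card (chain_classes le \<eta>) = card (chain_classes le \<xi>) - 1"
    using main[OF xuf fin ne] by blast
  define S1 where "S1 = {\<eta>' \<in> ultrafilters H le st. almost_eq \<eta> \<eta>'}"
  have S1R: "S1 \<in> ReH H le st" unfolding ReH_def S1_def using uf unfolding ultrafilters_def by blast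
  have "\<xi> \<in> uclosure H le st S1"
    unfolding uclosure_def S1_def ultrafilters_def using xuf clos by auto
  then have rle: "Re_le H le st S1 S" unfolding Re_le_def using xS by blast
  have neq: "S1 \<noteq> S"
  proof
    assume "S1 = S"
    then have "almost_eq \<eta> \<xi>" using xS unfolding S1_def by blast
    then show False using nae almost_eq_sym by blast
  qed
  have eS1: "\<eta> \<in> S1" unfolding S1_def ultrafilters_def using uf almost_eq_refl by blast
  define \<eta>0 where "\<eta>0 = (SOME \<eta>0. \<eta>0 \<in> S1)"
  have e0: "\<eta>0 \<in> S1" unfolding \<eta>0_def using eS1 by (rule someI)
  have e0uf: "ultrafilter H le st \<eta>0" and ae: "almost_eq \<eta> \<eta>0" using e0 unfolding S1_def ultrafilters_def by blast+
  have f0: "finite (chain_classes le \<eta>0)" "card (chain_classes le \<eta>0) = \<delta> - 1"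
    using almost_eq_classes[OF uf e0uf ae] fin1 crd1 crd by auto
  have "codim le S1 = enat (\<delta> - 1)"
    unfolding codim_def Let_def \<eta>0_def[symmetric] using f0 by simp
  then show ?thesis using S1R rle neq unfolding Re_less_def by blast
qed

end
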